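(* The renormalisation decoder on $\mathbf{T}_k$ can be run with $O(n\log_2 n)$ operations, where $n=2\cdot4^k$ is the length of the toric code, and, executing the instructions of each step of each reduction procedure simultaneously over all blocks, it can be parallelised to run in time $O(\log_2 n)$.
   Context: Fix $k\ge1$. Let $\mathbf{T}_k=(V_k,E_k)$ be the Cayley graph of $\mathbb{Z}/2^k\mathbb{Z}\times\mathbb{Z}/2^k\mathbb{Z}$ with generators $(\pm1,0),(0,\pm1)$, $n=|E_k|$. For $\hat{\mathbf{e}}\in\mathbb{F}_2^{E_k}$, $\sigma(\hat{\mathbf{e}})$ is the set of vertices incident to an odd number of its edges. For $0\le i\le k$ let $h_i=2^{k-i}$, $V_i$ the subgroup generated by $(h_i,0),(0,h_i)$, and $\mathbf{T}_i$ the graph on $V_i$ joining vertices differing by $\pm h_i$ in one coordinate; an edge of $\mathbf{T}_i$ is identified with the straight path of length $h_i$ in $\mathbf{T}_k$, and flipping it means adding that path mod 2. For $i\ge1$, a cell of $\mathbf{T}_i$ is a face with vertices $\alpha=(x,y),\beta=(x+h_i,y),\gamma=(x,y-h_i),\delta=(x+h_i,y-h_i)$ and edges $t=\alpha\beta,b=\gamma\delta,l=\alpha\gamma,r=\beta\delta$; a block is a square of side $2h_i$ with top-left corner in $V_{i-1}$, made of cells $A$ (top-left), $B$ (top-right), $C$ (bottom-left), $D$ (bottom-right). Reduction procedure on $\mathbf{T}_i$ (input $S\subseteq V_i$, output $\hat{\mathbf{e}}_i$; tests in each step use $S$ as at the start of the step). Step 1: in each $D$ cell, if $\alpha,\delta\in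 S$ flip $l,b$; if $\beta,\gamma\in S$ flip $b,r$; remove paired vertices from $S$. Step 2: in each $C$ cell, if $\alpha,\gamma\in S$ flip $l$, if $\beta,\delta\in S$ flip $r$; in each $B$ cell, if $\alpha,\beta\in S$ flip $t$, if $\gamma,\delta\in S$ flip $b$; remove paired vertices. Step 3: in each $A$ cell, if $\beta\in S$ flip $t$, if $\gamma\in S$ flip $l$, if $\delta\in S$ flip $l,b$. Renormalisation decoder: input $S=\sigma(\mathbf{e})$; set $\hat{\mathbf{e}}=0$, $i=k$; while $S\ne\emptyset$ and $i>0$, run the reduction procedure on $\mathbf{T}_i$ to get $\hat{\mathbf{e}}_i$, set $\hat{\mathbf{e}}\gets\hat{\mathbf{e}}+\hat{\mathbf{e}}_i$, $S\gets S\triangle\sigma(\hat{\mathbf{e}}_i)$, $i\gets i-1$; output $\hat{\mathbf{e}}$. *)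

theory Defs
  imports Complex_Main
begin

(* Vertices of T_k: pairs (x,y) with 0 <= x,y < 2^k, arithmetic mod 2^k. *)
type_synonym vtx = "nat \<times> nat"
(* Edges of T_k: (v, True) is the horizontal edge from v to v+(1,0);
   (v, False) is the vertical edge from v to v+(0,1).  This gives the
   Cayley (multi)graph with generators (+-1,0),(0,+-1): |E_k| = 2*4^k. *)
type_synonym edge = "vtx \<times> bool"

definition side :: "nat \<Rightarrow> nat" where "side k = 2 ^ k"

definition verts :: "nat \<Rightarrow> vtx set" where
  "verts k = {0..<side k} \<times> {0..<side k}"

definition edges :: "nat \<Rightarrow> edge set" where
  "edges k = verts k \<times> UNIV"

definition ends :: "nat \<Rightarrow> edge \<Rightarrow> vtx set" where
  "ends k ed = (case ed of
      ((x,y),True) \<Rightarrow> {(x,y), ((x+1) mod side k, y)}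
    | ((x,y),False) \<Rightarrow> {(x,y), (x, (y+1) mod side k)})"

definition sigma :: "nat \<Rightarrow> edge set \<Rightarrow> vtx set" where
  "sigma k e = {v \<in> verts k. odd (card {ed \<in> e. v \<in> ends k ed})}"

(* addition in F_2^E *)
definition symd :: "'a set \<Rightarrow> 'a set \<Rightarrow> 'a set" where
  "symd A B = (A - B) \<union> (B - A)"

(* F_2-sum of the family P over X *)
definition xsum :: "vtx set \<Rightarrow> (vtx \<Rightarrow> edge set) \<Rightarrow> edge set" where
  "xsum X P = {ed. odd (card {v \<in> X. ed \<in> P v})}"

definition hgt :: "nat \<Rightarrow> nat \<Rightarrow> nat" where "hgt k i = 2 ^ (k - i)"

definition hpath :: "nat \<Rightarrow> nat \<Rightarrow> vtx \<Rightarrow> edge set" where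
  "hpath k h v = {(((fst v + j) mod side k, snd v), True) | j. j < h}"
definition vpath :: "nat \<Rightarrow> nat \<Rightarrow> vtx \<Rightarrow> edge set" where
  "vpath k h v = {((fst v, (snd v + j) mod side k), False) | j. j < h}"

definition mvr :: "nat \<Rightarrow> nat \<Rightarrow> vtx \<Rightarrow> vtx" where
  "mvr k h v = ((fst v + h) mod side k, snd v)"
definition mvd :: "nat \<Rightarrow> nat \<Rightarrow> vtx \<Rightarrow> vtx" where
  "mvd k h v = (fst v, (snd v + side k - h) mod side k)"

definition lattice :: "nat \<Rightarrow> nat \<Rightarrow> vtx set" where
  "lattice k i = {v \<in> verts k. hgt k i dvd fst v \<and> hgt k i dvd snd v}"

(* cells of T_i, identified with their corner alpha = (x,y);
   cells k i rt bt: rt = right column of its block, bt = bottom row of its block.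
   A = cells False False, B = cells True False, C = cells False True, D = cells True True *)
definition cells :: "nat \<Rightarrow> nat \<Rightarrow> bool \<Rightarrow> bool \<Rightarrow> vtx set" where
  "cells k i rt bt = {v \<in> lattice k i.
      (\<not> 2 * hgt k i dvd fst v) = rt \<and> (\<not> 2 * hgt k i dvd snd v) = bt}"

(* corners of the cell with top-left corner v, at level i *)
definition cb :: "nat \<Rightarrow> nat \<Rightarrow> vtx \<Rightarrow> vtx" where "cb k i v = mvr k (hgt k i) v"
definition cg :: "nat \<Rightarrow> nat \<Rightarrow> vtx \<Rightarrow> vtx" where "cg k i v = mvd k (hgt k i) v"
definition cd :: "nat \<Rightarrow> nat \<Rightarrow> vtx \<Rightarrow> vtx" where "cd k i v = mvr k (hgt k i) (mvd k (hgt k i) v)"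
(* sides t = alpha beta, b = gamma delta, l = alpha gamma, r = beta delta *)
definition tE :: "nat \<Rightarrow> nat \<Rightarrow> vtx \<Rightarrow> edge set" where "tE k i v = hpath k (hgt k i) v"
definition bE :: "nat \<Rightarrow> nat \<Rightarrow> vtx \<Rightarrow> edge set" where "bE k i v = hpath k (hgt k i) (cg k i v)"
definition lE :: "nat \<Rightarrow> nat \<Rightarrow> vtx \<Rightarrow> edge set" where "lE k i v = vpath k (hgt k i) (cg k i v)"
definition rE :: "nat \<Rightarrow> nat \<Rightarrow> vtx \<Rightarrow> edge set" where "rE k i v = vpath k (hgt k i) (cd k i v)"

definition F1a where "F1a k i S = {v \<in> cells k i True True. v \<in> S \<and> cd k i v \<in> S}"
definition F1b where "F1b k i S = {v \<in> cells k i True True. cb k i v \<in> S \<and> cg k i v \<in> S}"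
definition step1_flip :: "nat \<Rightarrow> nat \<Rightarrow> vtx set \<Rightarrow> edge set" where
  "step1_flip k i S = symd (symd (xsum (F1a k i S) (lE k i)) (xsum (F1a k i S) (bE k i)))
                           (symd (xsum (F1b k i S) (bE k i)) (xsum (F1b k i S) (rE k i)))"
definition step1_rest :: "nat \<Rightarrow> nat \<Rightarrow> vtx set \<Rightarrow> vtx set" where
  "step1_rest k i S = S - (\<Union>v\<in>F1a k i S. {v, cd k i v}) - (\<Union>v\<in>F1b k i S. {cb k i v, cg k i v})"

definition F2a where "F2a k i S = {v \<in> cells k i False True. v \<in> S \<and> cg k i v \<in> S}"
definition F2b where "F2b k i S = {v \<in> cells k i False True. cb k i v \<in> S \<and> cd k i v \<in> S}"
definition F2c where "F2c k i S = {v \<in> cells k i True False. v \<in> S \<and> cb k i v \<in> S}"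
definition F2d where "F2d k i S = {v \<in> cells k i True False. cg k i v \<in> S \<and> cd k i v \<in> S}"
definition step2_flip :: "nat \<Rightarrow> nat \<Rightarrow> vtx set \<Rightarrow> edge set" where
  "step2_flip k i S = symd (symd (xsum (F2a k i S) (lE k i)) (xsum (F2b k i S) (rE k i)))
                           (symd (xsum (F2c k i S) (tE k i)) (xsum (F2d k i S) (bE k i)))"
definition step2_rest :: "nat \<Rightarrow> nat \<Rightarrow> vtx set \<Rightarrow> vtx set" where
  "step2_rest k i S = S - (\<Union>v\<in>F2a k i S. {v, cg k i v}) - (\<Union>v\<in>F2b k i S. {cb k i v, cd k i v})
                        - (\<Union>v\<in>F2c k i S. {v, cb k i v}) - (\<Union>v\<in>F2d k i S. {cg k i v, cd k i v})"

definition F3a where "F3a k i S = {v \<in> cells k i False False. cb k i v \<in> S}"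
definition F3b where "F3b k i S = {v \<in> cells k i False False. cg k i v \<in> S}"
definition F3c where "F3c k i S = {v \<in> cells k i False False. cd k i v \<in> S}"
definition step3_flip :: "nat \<Rightarrow> nat \<Rightarrow> vtx set \<Rightarrow> edge set" where
  "step3_flip k i S = symd (symd (xsum (F3a k i S) (tE k i)) (xsum (F3b k i S) (lE k i)))
                           (symd (xsum (F3c k i S) (lE k i)) (xsum (F3c k i S) (bE k i)))"

definition reduce :: "nat \<Rightarrow> nat \<Rightarrow> vtx set \<Rightarrow> edge set" where
  "reduce k i S = (let S1 = step1_rest k i S; S2 = step2_rest k i S1 in
      symd (step1_flip k i S) (symd (step2_flip k i S1) (step3_flip k i S2)))"

fun decode_from :: "nat \<Rightarrow> nat \<Rightarrow> vtx set \<Rightarrow> edge set" where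
  "decode_from k 0 S = {}"
| "decode_from k (Suc j) S = (if S = {} then {} else
     (let ei = reduce k (Suc j) S in symd ei (decode_from k j (symd S (sigma k ei)))))"

definition decoder :: "nat \<Rightarrow> edge set \<Rightarrow> edge set" where
  "decoder k e = decode_from k k (sigma k e)"

section \<open>Cost model: synchronous bounded fan-in machine (CREW PRAM on bits)\<close>

(* An elementary operation writes register tgt with f applied to the values
   of the source registers.  A round is a list of operations executed
   simultaneously (all read the state before the round; distinct targets). *)
type_synonym bop = "nat \<times> (bool list \<Rightarrow> bool) \<times> nat list"
type_synonym bround = "bop list"
type_synonym bprog = "bround list"

definition exec_round :: "bround \<Rightarrow> (nat \<Rightarrow> bool) \<Rightarrow> (nat \<Rightarrow> bool)" where
  "exec_round R s = (\<lambda>r. case find (\<lambda>q. fst q = r) R of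
      None \<Rightarrow> s r
    | Some (_, f, src) \<Rightarrow> f (map s src))"

definition exec :: "bprog \<Rightarrow> (nat \<Rightarrow> bool) \<Rightarrow> (nat \<Rightarrow> bool)" where
  "exec P s = fold exec_round P s"

definition well_formed :: "nat \<Rightarrow> bprog \<Rightarrow> bool" where
  "well_formed d P = (\<forall>R \<in> set P. distinct (map fst R) \<and>
      (\<forall>q \<in> set R. length (snd (snd q)) \<le> d))"

definition work :: "bprog \<Rightarrow> nat" where "work P = sum_list (map length P)"
definition depth :: "bprog \<Rightarrow> nat" where "depth P = length P"

end

theory Submission
  imports Defs "HOL-Library.Countable"
begin


lemma side_pos: "0 < side k" by (simp add: side_def)
lemma hgt_pos: "0 < hgt k i" by (simp add: hgt_def)
lemma hgt_dvd: "hgt k i dvd side k"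
  by (simp add: hgt_def side_def le_imp_power_dvd)
lemma hgt_le: "hgt k i \<le> side k"
  using hgt_dvd side_pos by (simp add: dvd_imp_le)

definition sh :: "nat \<Rightarrow> nat \<Rightarrow> int \<Rightarrow> int \<Rightarrow> vtx \<Rightarrow> vtx" where
  "sh k i a b w = (nat ((int (fst w) + a * int (hgt k i)) mod int (side k)),
                   nat ((int (snd w) + b * int (hgt k i)) mod int (side k)))"

lemma sh_verts: "sh k i a b w \<in> verts k"
  using side_pos[of k] by (auto simp: sh_def verts_def nat_less_iff)

lemma sh_comp: "sh k i c d (sh k i a b w) = sh k i (a+c) (b+d) w"
proof -
  have p: "0 < int (side k)" using side_pos by simp
  have g: "\<And>x a c h. ((x + a*h) mod int (side k) + c*h) mod int (side k) = (x + (a+c)*h) mod int (side k)"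
    by (metis mod_add_left_eq distrib_right add.assoc)
  have e: "\<And>X. int (nat (X mod int (side k))) = X mod int (side k)" using p by simp
  show ?thesis unfolding sh_def fst_conv snd_conv e g ..
qed

lemma sh_0: "w \<in> verts k \<Longrightarrow> sh k i 0 0 w = w"
  by (cases w) (auto simp: sh_def verts_def zmod_int[symmetric])

lemma mvr_sh: "w \<in> verts k \<Longrightarrow> mvr k (hgt k i) w = sh k i 1 0 w"
  by (cases w) (auto simp: sh_def verts_def mvr_def zmod_int[symmetric] of_nat_add[symmetric] simp del: of_nat_add)

lemma mvd_sh: "w \<in> verts k \<Longrightarrow> mvd k (hgt k i) w = sh k i 0 (-1) w"
proof (cases w)
  case (Pair x y)
  assume "w \<in> verts k"
  have le: "hgt k i \<le> side k" by (rule hgt_le)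
  have "int ((y + side k - hgt k i) mod side k) = (int y + int (side k) - int (hgt k i)) mod int (side k)"
    using le by (simp add: zmod_int of_nat_diff)
  also have "\<dots> = (int y - int (hgt k i)) mod int (side k)"
    by (metis add.commute add_diff_eq mod_add_self2)
  finally have "(y + side k - hgt k i) mod side k = nat ((int y - int (hgt k i)) mod int (side k))"
    by linarith
  then show ?thesis using Pair \<open>w \<in> verts k\<close> 
    by (auto simp: sh_def verts_def mvd_def zmod_int[symmetric])
qed

lemma cb_sh: "v \<in> verts k \<Longrightarrow> cb k i v = sh k i 1 0 v"
  by (simp add: cb_def mvr_sh)
lemma cg_sh: "v \<in> verts k \<Longrightarrow> cg k i v = sh k i 0 (-1) v"
  by (simp add: cg_def mvd_sh)
lemma cd_sh: "v \<in> verts k \<Longrightarrow> cd k i v = sh k i 1 (-1) v"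
  by (simp add: cd_def mvd_sh mvr_sh sh_verts sh_comp)

definition Win :: "nat \<Rightarrow> nat \<Rightarrow> vtx \<Rightarrow> int \<Rightarrow> vtx set" where
  "Win k i w r = {sh k i a b w | a b. \<bar>a\<bar> \<le> r \<and> \<bar>b\<bar> \<le> r}"

definition winL :: "nat \<Rightarrow> nat \<Rightarrow> vtx \<Rightarrow> int \<Rightarrow> vtx list" where
  "winL k i w r = concat (map (\<lambda>a. map (\<lambda>b. sh k i a b w) [-r..r]) [-r..r])"

lemma set_winL: "set (winL k i w r) = Win k i w r"
proof
  show "set (winL k i w r) \<subseteq> Win k i w r"
  proof
    fix u assume "u \<in> set (winL k i w r)"
    then obtain a b where ab: "a \<in> {-r..r}" "b \<in> {-r..r}" "u = sh k i a b w" unfolding winL_def by auto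
    then have "\<bar>a\<bar> \<le> r" "\<bar>b\<bar> \<le> r" by auto
    then show "u \<in> Win k i w r" using ab(3) unfolding Win_def by blast
  qed
  show "Win k i w r \<subseteq> set (winL k i w r)"
  proof
    fix u assume "u \<in> Win k i w r"
    then obtain a b where "u = sh k i a b w" "\<bar>a\<bar> \<le> r" "\<bar>b\<bar> \<le> r" unfolding Win_def by blast
    then show "u \<in> set (winL k i w r)" unfolding winL_def by (auto simp: abs_le_iff intro!: bexI[of _ a])
  qed
qed

lemma length_winL_gen: "length (winL k i w r) = length [-r..r] * length [-r..r]"
  unfolding winL_def length_concat by (simp add: o_def sum_list_triv)

lemma length_winL: "length (winL k i w 6) = 169"
  unfolding length_winL_gen by simp

lemma Win_verts: "Win k i w r \<subseteq> verts k"
  unfolding Win_def using sh_verts by blast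

lemma Win_trans: "u \<in> Win k i w r \<Longrightarrow> v \<in> Win k i u s \<Longrightarrow> v \<in> Win k i w (r+s)"
  unfolding Win_def
  apply clarify
  apply (simp add: sh_comp)
  by (metis abs_triangle_ineq add.commute add_mono order_trans)

lemma Win_self: "w \<in> verts k \<Longrightarrow> 0 \<le> r \<Longrightarrow> w \<in> Win k i w r"
proof -
  assume a: "w \<in> verts k" "0 \<le> r"
  have "sh k i 0 0 w = w" using sh_0[OF a(1)] .
  then have "\<exists>a b. w = sh k i a b w \<and> \<bar>a\<bar> \<le> r \<and> \<bar>b\<bar> \<le> r" using a(2)
    by (intro exI[of _ 0]) simp
  then show ?thesis unfolding Win_def by blast
qed

lemma Win_sh: "\<bar>a\<bar> \<le> r \<Longrightarrow> \<bar>b\<bar> \<le> r \<Longrightarrow> sh k i a b w \<in> Win k i w r"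
  unfolding Win_def by blast

lemma Win_inv: "v \<in> verts k \<Longrightarrow> \<bar>a\<bar> \<le> 1 \<Longrightarrow> \<bar>b\<bar> \<le> 1 \<Longrightarrow> v \<in> Win k i (sh k i a b v) 1"
proof -
  assume "v \<in> verts k" "\<bar>a\<bar> \<le> 1" "\<bar>b\<bar> \<le> 1"
  then have "sh k i (-a) (-b) (sh k i a b v) = v" by (simp add: sh_comp sh_0)
  then show ?thesis using Win_sh[of "-a" 1 "-b" k i "sh k i a b v"] \<open>\<bar>a\<bar> \<le> 1\<close> \<open>\<bar>b\<bar> \<le> 1\<close> by simp
qed

lemma touch: "v \<in> verts k \<Longrightarrow> u \<in> {v, cb k i v, cg k i v, cd k i v} \<Longrightarrow> v \<in> Win k i u 1"
  using Win_inv[of v k 0 0 i] Win_inv[of v k 1 0 i] Win_inv[of v k 0 "-1" i] Win_inv[of v k 1 "-1" i]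
  by (auto simp: cb_sh cg_sh cd_sh sh_0)

lemma corners_Win: "v \<in> verts k \<Longrightarrow> v \<in> Win k i v 1 \<and> cb k i v \<in> Win k i v 1 \<and> cg k i v \<in> Win k i v 1 \<and> cd k i v \<in> Win k i v 1"
  by (simp add: Win_self cb_sh cg_sh cd_sh Win_sh)



lemma Win_mono: "u \<in> Win k i w r \<Longrightarrow> r \<le> s \<Longrightarrow> u \<in> Win k i w s"
  unfolding Win_def by force

lemma Win_trans2: "u \<in> Win k i w r \<Longrightarrow> v \<in> Win k i u s \<Longrightarrow> r + s \<le> t \<Longrightarrow> v \<in> Win k i w t"
  using Win_trans Win_mono by blast

lemma sh_lattice:
  assumes "hgt k i dvd fst w" "hgt k i dvd snd w"
  shows "hgt k i dvd fst (sh k i a b w) \<and> hgt k i dvd snd (sh k i a b w)"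
proof -
  have d: "int (hgt k i) dvd int (side k)" using hgt_dvd by simp
  have p: "0 < int (side k)" using side_pos by simp
  have g: "\<And>x c. hgt k i dvd x \<Longrightarrow> hgt k i dvd nat ((int x + c * int (hgt k i)) mod int (side k))"
  proof -
    fix x c assume "hgt k i dvd x"
    then have "int (hgt k i) dvd (int x + c * int (hgt k i))" by simp
    then have "int (hgt k i) dvd (int x + c * int (hgt k i)) mod int (side k)"
      using d by (simp add: dvd_mod)
    moreover have "0 \<le> (int x + c * int (hgt k i)) mod int (side k)" using p by simp
    ultimately show "hgt k i dvd nat ((int x + c * int (hgt k i)) mod int (side k))"
      by (metis int_nat_eq of_nat_dvd_iff)
  qed
  show ?thesis using assms g by (simp add: sh_def)
qed

lemma lattice_verts: "lattice k i \<subseteq> verts k" by (auto simp: lattice_def)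
lemma cells_lattice: "cells k i rt bt \<subseteq> lattice k i" by (auto simp: cells_def)
lemma cells_verts: "cells k i rt bt \<subseteq> verts k" using cells_lattice lattice_verts by blast

lemma sh_lat: "w \<in> lattice k i \<Longrightarrow> sh k i a b w \<in> lattice k i"
  using sh_lattice[of k i w a b] sh_verts[of k i a b w] by (auto simp: lattice_def)

definition base :: "nat \<Rightarrow> nat \<Rightarrow> vtx \<Rightarrow> vtx" where
  "base k i p = (fst p div hgt k i * hgt k i, snd p div hgt k i * hgt k i)"

lemma base_aux:
  fixes x j h N :: nat
  assumes "h dvd x" "x < N" "h dvd N" "0 < h" "j < h"
  shows "((x + j) mod N) div h * h = x"
proof -
  obtain m where m: "x = h * m" using assms(1) by blast
  obtain M where M: "N = h * M" using assms(3) by blast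
  have "m < M" using assms(2,4) m M by simp
  then have "h * m + h \<le> h * M"
    by (metis Suc_leI mult_Suc_right add.commute mult_le_mono2)
  then have "x + j < N" using m M assms(5) by linarith
  then have "(x + j) mod N = h * m + j" using m by simp
  moreover have "(h * m + j) div h = m" using assms(4,5) by simp
  ultimately show ?thesis using m by simp
qed

lemma base_aux0:
  fixes x h :: nat
  assumes "h dvd x" "0 < h"
  shows "x div h * h = x"
  using assms by simp

lemma base_hpath: "w \<in> lattice k i \<Longrightarrow> ed \<in> hpath k (hgt k i) w \<Longrightarrow> base k i (fst ed) = w"
  unfolding hpath_def lattice_def verts_def base_def
  using base_aux[OF _ _ hgt_dvd hgt_pos] hgt_pos[of k i]
  by (cases w) auto

lemma base_vpath: "w \<in> lattice k i \<Longrightarrow> ed \<in> vpath k (hgt k i) w \<Longrightarrow> base k i (fst ed) = w"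
  unfolding vpath_def lattice_def verts_def base_def
  using base_aux[OF _ _ hgt_dvd hgt_pos] hgt_pos[of k i]
  by (cases w) auto

lemma path_Win:
  assumes v: "v \<in> cells k i rt bt"
  shows "ed \<in> tE k i v \<Longrightarrow> v \<in> Win k i (base k i (fst ed)) 1"
    and "ed \<in> bE k i v \<Longrightarrow> v \<in> Win k i (base k i (fst ed)) 1"
    and "ed \<in> lE k i v \<Longrightarrow> v \<in> Win k i (base k i (fst ed)) 1"
    and "ed \<in> rE k i v \<Longrightarrow> v \<in> Win k i (base k i (fst ed)) 1"
proof -
  have vl: "v \<in> lattice k i" and vv: "v \<in> verts k" using v cells_lattice cells_verts by blast+
  have gl: "cg k i v \<in> lattice k i" using sh_lat[OF vl] cg_sh[OF vv] by simp
  have dl: "cd k i v \<in> lattice k i" using sh_lat[OF vl] cd_sh[OF vv] by simp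
  show "ed \<in> tE k i v \<Longrightarrow> v \<in> Win k i (base k i (fst ed)) 1"
    using base_hpath[OF vl] Win_self[OF vv] by (simp add: tE_def)
  show "ed \<in> bE k i v \<Longrightarrow> v \<in> Win k i (base k i (fst ed)) 1"
    using base_hpath[OF gl] Win_inv[OF vv, of 0 "-1" i] cg_sh[OF vv] by (simp add: bE_def)
  show "ed \<in> lE k i v \<Longrightarrow> v \<in> Win k i (base k i (fst ed)) 1"
    using base_vpath[OF gl] Win_inv[OF vv, of 0 "-1" i] cg_sh[OF vv] by (simp add: lE_def)
  show "ed \<in> rE k i v \<Longrightarrow> v \<in> Win k i (base k i (fst ed)) 1"
    using base_vpath[OF dl] Win_inv[OF vv, of 1 "-1" i] cd_sh[OF vv] by (simp add: rE_def)
qed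



definition agr :: "vtx set \<Rightarrow> vtx set \<Rightarrow> vtx set \<Rightarrow> bool" where
  "agr S S' A = (\<forall>u\<in>A. (u \<in> S) = (u \<in> S'))"

lemma in_symd[simp]: "(x \<in> symd A B) = ((x \<in> A) \<noteq> (x \<in> B))"
  by (auto simp: symd_def)

lemma F_loc:
  assumes a: "agr S S' (Win k i w s)" and v: "v \<in> Win k i w r" and rs: "r + 1 \<le> s"
  shows "(v \<in> F1a k i S) = (v \<in> F1a k i S')" "(v \<in> F1b k i S) = (v \<in> F1b k i S')"
    "(v \<in> F2a k i S) = (v \<in> F2a k i S')" "(v \<in> F2b k i S) = (v \<in> F2b k i S')"
    "(v \<in> F2c k i S) = (v \<in> F2c k i S')" "(v \<in> F2d k i S) = (v \<in> F2d k i S')"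
    "(v \<in> F3a k i S) = (v \<in> F3a k i S')" "(v \<in> F3b k i S) = (v \<in> F3b k i S')"
    "(v \<in> F3c k i S) = (v \<in> F3c k i S')"
proof -
  have vv: "v \<in> verts k" using v Win_verts by blast
  have c: "v \<in> Win k i w s" "cb k i v \<in> Win k i w s" "cg k i v \<in> Win k i w s" "cd k i v \<in> Win k i w s"
    using corners_Win[OF vv, of i] Win_trans2[OF v _ rs] by blast+
  have e: "(v \<in> S) = (v \<in> S')" "(cb k i v \<in> S) = (cb k i v \<in> S')"
     "(cg k i v \<in> S) = (cg k i v \<in> S')" "(cd k i v \<in> S) = (cd k i v \<in> S')"
    using a c unfolding agr_def by blast+
  show "(v \<in> F1a k i S) = (v \<in> F1a k i S')" "(v \<in> F1b k i S) = (v \<in> F1b k i S')"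
    "(v \<in> F2a k i S) = (v \<in> F2a k i S')" "(v \<in> F2b k i S) = (v \<in> F2b k i S')"
    "(v \<in> F2c k i S) = (v \<in> F2c k i S')" "(v \<in> F2d k i S) = (v \<in> F2d k i S')"
    "(v \<in> F3a k i S) = (v \<in> F3a k i S')" "(v \<in> F3b k i S) = (v \<in> F3b k i S')"
    "(v \<in> F3c k i S) = (v \<in> F3c k i S')"
    by (simp_all add: F1a_def F1b_def F2a_def F2b_def F2c_def F2d_def F3a_def F3b_def F3c_def e)
qed

lemma F_cells:
  "F1a k i S \<subseteq> cells k i True True" "F1b k i S \<subseteq> cells k i True True"
  "F2a k i S \<subseteq> cells k i False True" "F2b k i S \<subseteq> cells k i False True"
  "F2c k i S \<subseteq> cells k i True False" "F2d k i S \<subseteq> cells k i True False"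
  "F3a k i S \<subseteq> cells k i False False" "F3b k i S \<subseteq> cells k i False False"
  "F3c k i S \<subseteq> cells k i False False"
  by (auto simp: F1a_def F1b_def F2a_def F2b_def F2c_def F2d_def F3a_def F3b_def F3c_def)

lemma F_verts:
  "F1a k i S \<subseteq> verts k" "F1b k i S \<subseteq> verts k"
  "F2a k i S \<subseteq> verts k" "F2b k i S \<subseteq> verts k"
  "F2c k i S \<subseteq> verts k" "F2d k i S \<subseteq> verts k"
  by (meson F_cells cells_verts order_trans)+

lemma rm_loc:
  assumes X: "X \<subseteq> verts k" "X' \<subseteq> verts k"
    and e: "\<And>v. v \<in> Win k i w (r+1) \<Longrightarrow> (v \<in> X) = (v \<in> X')"
    and g: "\<And>v. v \<in> verts k \<Longrightarrow> g v \<subseteq> {v, cb k i v, cg k i v, cd k i v}"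
    and u: "u \<in> Win k i w r"
  shows "(u \<in> (\<Union>v\<in>X. g v)) = (u \<in> (\<Union>v\<in>X'. g v))"
proof -
  have T: "\<And>v. v \<in> verts k \<Longrightarrow> u \<in> g v \<Longrightarrow> v \<in> Win k i w (r+1)"
  proof -
    fix v assume vv: "v \<in> verts k" and uv: "u \<in> g v"
    have "u \<in> {v, cb k i v, cg k i v, cd k i v}" using g[OF vv] uv by blast
    then have "v \<in> Win k i u 1" by (rule touch[OF vv])
    then show "v \<in> Win k i w (r+1)" by (rule Win_trans[OF u])
  qed
  show ?thesis using X e T by blast
qed

lemma rest1_loc:
  assumes a: "agr S S' (Win k i w (r+2))"
  shows "agr (step1_rest k i S) (step1_rest k i S') (Win k i w r)"
  unfolding agr_def
proof
  fix u assume u: "u \<in> Win k i w r"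
  have uS: "(u \<in> S) = (u \<in> S')" using a u Win_mono[OF u, of "r+2"] unfolding agr_def by auto
  have e1: "\<And>v. v \<in> Win k i w (r+1) \<Longrightarrow> (v \<in> F1a k i S) = (v \<in> F1a k i S')"
     "\<And>v. v \<in> Win k i w (r+1) \<Longrightarrow> (v \<in> F1b k i S) = (v \<in> F1b k i S')"
    using F_loc(1,2)[OF a] by auto
  have X: "F1a k i S \<subseteq> verts k" "F1a k i S' \<subseteq> verts k" "F1b k i S \<subseteq> verts k" "F1b k i S' \<subseteq> verts k"
    by (simp_all add: F_verts)
  have r1: "(u \<in> (\<Union>v\<in>F1a k i S. {v, cd k i v})) = (u \<in> (\<Union>v\<in>F1a k i S'. {v, cd k i v}))"
    by (rule rm_loc[OF X(1,2) e1(1) _ u]) auto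
  have r2: "(u \<in> (\<Union>v\<in>F1b k i S. {cb k i v, cg k i v})) = (u \<in> (\<Union>v\<in>F1b k i S'. {cb k i v, cg k i v}))"
    by (rule rm_loc[OF X(3,4) e1(2) _ u]) auto
  show "(u \<in> step1_rest k i S) = (u \<in> step1_rest k i S')"
    unfolding step1_rest_def by (simp only: Diff_iff r1 r2 uS)
qed

lemma rest2_loc:
  assumes a: "agr S S' (Win k i w (r+2))"
  shows "agr (step2_rest k i S) (step2_rest k i S') (Win k i w r)"
  unfolding agr_def
proof
  fix u assume u: "u \<in> Win k i w r"
  have uS: "(u \<in> S) = (u \<in> S')" using a u Win_mono[OF u, of "r+2"] unfolding agr_def by auto
  have e1: "\<And>v. v \<in> Win k i w (r+1) \<Longrightarrow> (v \<in> F2a k i S) = (v \<in> F2a k i S')"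
     "\<And>v. v \<in> Win k i w (r+1) \<Longrightarrow> (v \<in> F2b k i S) = (v \<in> F2b k i S')"
     "\<And>v. v \<in> Win k i w (r+1) \<Longrightarrow> (v \<in> F2c k i S) = (v \<in> F2c k i S')"
     "\<And>v. v \<in> Win k i w (r+1) \<Longrightarrow> (v \<in> F2d k i S) = (v \<in> F2d k i S')"
    using F_loc(3,4,5,6)[OF a] by auto
  have X: "F2a k i S \<subseteq> verts k" "F2a k i S' \<subseteq> verts k" "F2b k i S \<subseteq> verts k" "F2b k i S' \<subseteq> verts k"
     "F2c k i S \<subseteq> verts k" "F2c k i S' \<subseteq> verts k" "F2d k i S \<subseteq> verts k" "F2d k i S' \<subseteq> verts k"
    by (simp_all add: F_verts)
  have r1: "(u \<in> (\<Union>v\<in>F2a k i S. {v, cg k i v})) = (u \<in> (\<Union>v\<in>F2a k i S'. {v, cg k i v}))"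
    by (rule rm_loc[OF X(1,2) e1(1) _ u]) auto
  have r2: "(u \<in> (\<Union>v\<in>F2b k i S. {cb k i v, cd k i v})) = (u \<in> (\<Union>v\<in>F2b k i S'. {cb k i v, cd k i v}))"
    by (rule rm_loc[OF X(3,4) e1(2) _ u]) auto
  have r3: "(u \<in> (\<Union>v\<in>F2c k i S. {v, cb k i v})) = (u \<in> (\<Union>v\<in>F2c k i S'. {v, cb k i v}))"
    by (rule rm_loc[OF X(5,6) e1(3) _ u]) auto
  have r4: "(u \<in> (\<Union>v\<in>F2d k i S. {cg k i v, cd k i v})) = (u \<in> (\<Union>v\<in>F2d k i S'. {cg k i v, cd k i v}))"
    by (rule rm_loc[OF X(7,8) e1(4) _ u]) auto
  show "(u \<in> step2_rest k i S) = (u \<in> step2_rest k i S')"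
    unfolding step2_rest_def by (simp only: Diff_iff r1 r2 r3 r4 uS)
qed

lemma xsum_loc:
  assumes "\<And>v. ed \<in> P v \<Longrightarrow> (v \<in> X) = (v \<in> X')"
  shows "(ed \<in> xsum X P) = (ed \<in> xsum X' P)"
proof -
  have "{v \<in> X. ed \<in> P v} = {v \<in> X'. ed \<in> P v}" using assms by blast
  then show ?thesis by (simp add: xsum_def)
qed

lemma flipF:
  assumes "X \<subseteq> cells k i rt bt" "X' \<subseteq> cells k i rt bt"
    and "\<And>v. v \<in> Win k i (base k i (fst ed)) 1 \<Longrightarrow> (v \<in> X) = (v \<in> X')"
    and "\<And>v. v \<in> cells k i rt bt \<Longrightarrow> ed \<in> P v \<Longrightarrow> v \<in> Win k i (base k i (fst ed)) 1"
  shows "(ed \<in> xsum X P) = (ed \<in> xsum X' P)"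
proof (rule xsum_loc)
  fix v assume ed: "ed \<in> P v"
  show "(v \<in> X) = (v \<in> X')"
  proof (cases "v \<in> cells k i rt bt")
    case True
    then show ?thesis using assms(3) assms(4)[OF True ed] by blast
  next
    case False
    then show ?thesis using assms(1,2) by blast
  qed
qed




lemma agr_mono: "agr S S' A \<Longrightarrow> B \<subseteq> A \<Longrightarrow> agr S S' B"
  unfolding agr_def by blast

lemma Win_sub: "r \<le> s \<Longrightarrow> Win k i w r \<subseteq> Win k i w s"
  using Win_mono by blast

lemma flip_loc:
  assumes a: "agr S S' (Win k i (base k i (fst ed)) s)" and s: "2 \<le> s"
  shows "(ed \<in> step1_flip k i S) = (ed \<in> step1_flip k i S')"
    and "(ed \<in> step2_flip k i S) = (ed \<in> step2_flip k i S')"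
    and "(ed \<in> step3_flip k i S) = (ed \<in> step3_flip k i S')"
proof -
  let ?b = "base k i (fst ed)"
  have rs: "1 + 1 \<le> s" using s by simp
  note FL = F_loc[OF a _ rs]
  have x1: "(ed \<in> xsum (F1a k i S) (lE k i)) = (ed \<in> xsum (F1a k i S') (lE k i))"
    by (rule flipF[OF F_cells(1) F_cells(1) FL(1) path_Win(3)])
  have x2: "(ed \<in> xsum (F1a k i S) (bE k i)) = (ed \<in> xsum (F1a k i S') (bE k i))"
    by (rule flipF[OF F_cells(1) F_cells(1) FL(1) path_Win(2)])
  have x3: "(ed \<in> xsum (F1b k i S) (bE k i)) = (ed \<in> xsum (F1b k i S') (bE k i))"
    by (rule flipF[OF F_cells(2) F_cells(2) FL(2) path_Win(2)])
  have x4: "(ed \<in> xsum (F1b k i S) (rE k i)) = (ed \<in> xsum (F1b k i S') (rE k i))"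
    by (rule flipF[OF F_cells(2) F_cells(2) FL(2) path_Win(4)])
  show "(ed \<in> step1_flip k i S) = (ed \<in> step1_flip k i S')"
    unfolding step1_flip_def in_symd x1 x2 x3 x4 ..
  have y1: "(ed \<in> xsum (F2a k i S) (lE k i)) = (ed \<in> xsum (F2a k i S') (lE k i))"
    by (rule flipF[OF F_cells(3) F_cells(3) FL(3) path_Win(3)])
  have y2: "(ed \<in> xsum (F2b k i S) (rE k i)) = (ed \<in> xsum (F2b k i S') (rE k i))"
    by (rule flipF[OF F_cells(4) F_cells(4) FL(4) path_Win(4)])
  have y3: "(ed \<in> xsum (F2c k i S) (tE k i)) = (ed \<in> xsum (F2c k i S') (tE k i))"
    by (rule flipF[OF F_cells(5) F_cells(5) FL(5) path_Win(1)])
  have y4: "(ed \<in> xsum (F2d k i S) (bE k i)) = (ed \<in> xsum (F2d k i S') (bE k i))"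
    by (rule flipF[OF F_cells(6) F_cells(6) FL(6) path_Win(2)])
  show "(ed \<in> step2_flip k i S) = (ed \<in> step2_flip k i S')"
    unfolding step2_flip_def in_symd y1 y2 y3 y4 ..
  have z1: "(ed \<in> xsum (F3a k i S) (tE k i)) = (ed \<in> xsum (F3a k i S') (tE k i))"
    by (rule flipF[OF F_cells(7) F_cells(7) FL(7) path_Win(1)])
  have z2: "(ed \<in> xsum (F3b k i S) (lE k i)) = (ed \<in> xsum (F3b k i S') (lE k i))"
    by (rule flipF[OF F_cells(8) F_cells(8) FL(8) path_Win(3)])
  have z3: "(ed \<in> xsum (F3c k i S) (lE k i)) = (ed \<in> xsum (F3c k i S') (lE k i))"
    by (rule flipF[OF F_cells(9) F_cells(9) FL(9) path_Win(3)])
  have z4: "(ed \<in> xsum (F3c k i S) (bE k i)) = (ed \<in> xsum (F3c k i S') (bE k i))"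
    by (rule flipF[OF F_cells(9) F_cells(9) FL(9) path_Win(2)])
  show "(ed \<in> step3_flip k i S) = (ed \<in> step3_flip k i S')"
    unfolding step3_flip_def in_symd z1 z2 z3 z4 ..
qed

lemma reduce_loc:
  assumes a: "agr S S' (Win k i (base k i (fst ed)) 6)"
  shows "(ed \<in> reduce k i S) = (ed \<in> reduce k i S')"
proof -
  let ?b = "base k i (fst ed)"
  have a1: "agr (step1_rest k i S) (step1_rest k i S') (Win k i ?b 4)"
    using rest1_loc[of S S' k i ?b 4] a by simp
  have a2: "agr (step2_rest k i (step1_rest k i S)) (step2_rest k i (step1_rest k i S')) (Win k i ?b 2)"
    using rest2_loc[of "step1_rest k i S" "step1_rest k i S'" k i ?b 2] a1 by simp
  show ?thesis
    unfolding reduce_def Let_def in_symd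
    using flip_loc(1)[OF a] flip_loc(2)[OF a1] flip_loc(3)[OF a2] by simp
qed

lemma xsum_sub: "(\<And>v. v \<in> X \<Longrightarrow> P v \<subseteq> E) \<Longrightarrow> xsum X P \<subseteq> E"
proof
  fix ed assume h: "\<And>v. v \<in> X \<Longrightarrow> P v \<subseteq> E" and ed: "ed \<in> xsum X P"
  then have "odd (card {v \<in> X. ed \<in> P v})" by (simp add: xsum_def)
  then have "{v \<in> X. ed \<in> P v} \<noteq> {}" by (metis card.empty even_zero)
  then show "ed \<in> E" using h by blast
qed

lemma symd_sub: "A \<subseteq> E \<Longrightarrow> B \<subseteq> E \<Longrightarrow> symd A B \<subseteq> E"
  by (auto simp: symd_def)

lemma hpath_edges: "w \<in> verts k \<Longrightarrow> hpath k h w \<subseteq> edges k"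
  using side_pos[of k] by (auto simp: hpath_def edges_def verts_def)
lemma vpath_edges: "w \<in> verts k \<Longrightarrow> vpath k h w \<subseteq> edges k"
  using side_pos[of k] by (auto simp: vpath_def edges_def verts_def)

lemma paths_edges:
  assumes "v \<in> cells k i rt bt"
  shows "tE k i v \<subseteq> edges k" "bE k i v \<subseteq> edges k" "lE k i v \<subseteq> edges k" "rE k i v \<subseteq> edges k"
proof -
  have vv: "v \<in> verts k" using assms cells_verts by blast
  have g: "cg k i v \<in> verts k" "cd k i v \<in> verts k" using cg_sh[OF vv] cd_sh[OF vv] sh_verts by simp_all
  show "tE k i v \<subseteq> edges k" "bE k i v \<subseteq> edges k" "lE k i v \<subseteq> edges k" "rE k i v \<subseteq> edges k"
    unfolding tE_def bE_def lE_def rE_def using hpath_edges vpath_edges vv g by blast+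
qed

lemma xsumF: "X \<subseteq> cells k i rt bt \<Longrightarrow> P \<in> {tE k i, bE k i, lE k i, rE k i} \<Longrightarrow> xsum X P \<subseteq> edges k"
proof (rule xsum_sub)
  fix v assume "X \<subseteq> cells k i rt bt" "P \<in> {tE k i, bE k i, lE k i, rE k i}" "v \<in> X"
  then have "v \<in> cells k i rt bt" by blast
  then show "P v \<subseteq> edges k" using paths_edges[of v k i rt bt] \<open>P \<in> _\<close> by auto
qed

lemma reduce_edges: "reduce k i S \<subseteq> edges k"
  unfolding reduce_def Let_def step1_flip_def step2_flip_def step3_flip_def
  apply (intro symd_sub)
  apply (rule xsumF, rule F_cells, simp)+
  done

lemma reduce_empty: "reduce k i {} = {}"
  by (simp add: reduce_def step1_flip_def step2_flip_def step3_flip_def step1_rest_def step2_rest_def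
     F1a_def F1b_def F2a_def F2b_def F2c_def F2d_def F3a_def F3b_def F3c_def xsum_def symd_def)

definition incl :: "nat \<Rightarrow> vtx \<Rightarrow> edge list" where
  "incl k v = [(v,True),(v,False),(((fst v + side k - 1) mod side k, snd v),True),
               ((fst v,(snd v + side k - 1) mod side k),False)]"

lemma pred_aux: "(a::nat) < N \<Longrightarrow> ((a+1) mod N + N - 1) mod N = a"
proof (cases "a + 1 < N")
  case True
  then show ?thesis by simp
next
  case False
  assume "a < N"
  then have "a + 1 = N" using False by simp
  then show ?thesis by simp
qed

lemma pred_aux2: "(a::nat) < N \<Longrightarrow> (Suc a mod N + N - Suc 0) mod N = a"
  using pred_aux by simp

lemma incl_ok: assumes "ed \<in> edges k" "v \<in> ends k ed" shows "ed \<in> set (incl k v)"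
proof -
  obtain a b d where ed: "ed = ((a,b),d)" by (metis prod.exhaust)
  have ab: "a < side k" "b < side k" using assms(1) ed by (auto simp: edges_def verts_def)
  show ?thesis
  proof (cases d)
    case True
    then have "v = (a,b) \<or> v = ((a+1) mod side k, b)" using assms(2) ed by (simp add: ends_def)
    then show ?thesis using ed True pred_aux[OF ab(1)] by (auto simp: incl_def)
  next
    case False
    then have "v = (a,b) \<or> v = (a, (b+1) mod side k)" using assms(2) ed by (simp add: ends_def)
    then show ?thesis using ed False pred_aux[OF ab(2)] by (auto simp: incl_def)
  qed
qed

definition vwin :: "nat \<Rightarrow> nat \<Rightarrow> vtx \<Rightarrow> vtx list" where
  "vwin k i v = v # concat (map (\<lambda>ed. winL k i (base k i (fst ed)) 6) (incl k v))"

lemma vert_loc: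
  assumes v: "v \<in> verts k" and a: "agr S S' (set (vwin k i v))"
  shows "(v \<in> symd S (sigma k (reduce k i S))) = (v \<in> symd S' (sigma k (reduce k i S')))"
proof -
  have vS: "(v \<in> S) = (v \<in> S')" using a by (simp add: agr_def vwin_def)
  have re: "\<And>ed. ed \<in> set (incl k v) \<Longrightarrow> (ed \<in> reduce k i S) = (ed \<in> reduce k i S')"
  proof -
    fix ed assume "ed \<in> set (incl k v)"
    then have "Win k i (base k i (fst ed)) 6 \<subseteq> set (vwin k i v)"
      by (auto simp: vwin_def set_winL)
    then show "(ed \<in> reduce k i S) = (ed \<in> reduce k i S')"
      by (rule reduce_loc[OF agr_mono[OF a]])
  qed
  have st: "\<And>T. {ed \<in> reduce k i T. v \<in> ends k ed} = {ed \<in> set (incl k v). ed \<in> reduce k i T \<and> v \<in> ends k ed}"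
    using reduce_edges incl_ok by blast
  have "{ed \<in> reduce k i S. v \<in> ends k ed} = {ed \<in> reduce k i S'. v \<in> ends k ed}"
    unfolding st using re by blast
  then have "(v \<in> sigma k (reduce k i S)) = (v \<in> sigma k (reduce k i S'))"
    by (simp add: sigma_def)
  then show ?thesis using vS by simp
qed

lemma length_vwin: "length (vwin k i v) = 677"
  by (simp add: vwin_def incl_def length_winL)




definition inp :: "vtx \<Rightarrow> nat" where "inp v = to_nat (Inl v :: vtx + edge)"
definition outp :: "edge \<Rightarrow> nat" where "outp ed = to_nat (Inr ed :: vtx + edge)"

lemma inj_inp: "inj inp" by (auto simp: inj_def inp_def)
lemma inj_outp: "inj outp" by (auto simp: inj_def outp_def)
lemma inp_outp: "inp v \<noteq> outp ed" by (simp add: inp_def outp_def)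

definition vl :: "nat \<Rightarrow> vtx list" where "vl k = List.product [0..<side k] [0..<side k]"
definition el :: "nat \<Rightarrow> edge list" where "el k = List.product (vl k) [True, False]"

lemma set_vl: "set (vl k) = verts k" by (auto simp: vl_def verts_def)
lemma set_el: "set (el k) = edges k" by (auto simp: el_def edges_def set_vl)
lemma distinct_vl: "distinct (vl k)" by (simp add: vl_def distinct_product)
lemma distinct_el: "distinct (el k)" by (simp add: el_def distinct_product distinct_vl)

definition dec :: "vtx list \<Rightarrow> bool list \<Rightarrow> vtx set" where
  "dec L bs = {L ! j | j. j < length L \<and> bs ! j}"

lemma dec_map: "dec L (map f L) = {u \<in> set L. f u}"
  by (auto simp: dec_def in_set_conv_nth) (metis nth_map)

definition vop :: "nat \<Rightarrow> nat \<Rightarrow> vtx \<Rightarrow> bop" where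
  "vop k i v = (inp v, \<lambda>bs. v \<in> symd (dec (vwin k i v) bs) (sigma k (reduce k i (dec (vwin k i v) bs))),
                map inp (vwin k i v))"

definition eop :: "nat \<Rightarrow> nat \<Rightarrow> edge \<Rightarrow> bop" where
  "eop k i ed = (outp ed, \<lambda>bs. hd bs \<noteq> (ed \<in> reduce k i (dec (winL k i (base k i (fst ed)) 6) (tl bs))),
                 outp ed # map inp (winL k i (base k i (fst ed)) 6))"

definition rnd :: "nat \<Rightarrow> nat \<Rightarrow> bround" where
  "rnd k i = map (vop k i) (vl k) @ map (eop k i) (el k)"

definition prog :: "nat \<Rightarrow> bprog" where
  "prog k = map (rnd k) (rev [1..<Suc k])"

lemma find_distinct: "distinct (map fst R) \<Longrightarrow> q \<in> set R \<Longrightarrow> find (\<lambda>q'. fst q' = fst q) R = Some q"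
  by (induction R) (auto simp: rev_image_eqI)

lemma exec_round_at:
  assumes "distinct (map fst R)" "(t, f, src) \<in> set R"
  shows "exec_round R s t = f (map s src)"
  using find_distinct[OF assms] by (simp add: exec_round_def)

lemma distinct_rnd: "distinct (map fst (rnd k i))"
proof -
  have "map fst (rnd k i) = map inp (vl k) @ map outp (el k)"
    by (simp add: rnd_def vop_def eop_def o_def)
  moreover have "distinct (map inp (vl k))"
    by (simp add: distinct_map distinct_vl inj_on_subset[OF inj_inp subset_UNIV])
  moreover have "distinct (map outp (el k))"
    by (simp add: distinct_map distinct_el inj_on_subset[OF inj_outp subset_UNIV])
  moreover have "set (map inp (vl k)) \<inter> set (map outp (el k)) = {}"
    using inp_outp by auto
  ultimately show ?thesis by simp
qed

definition rep :: "nat \<Rightarrow> (nat \<Rightarrow> bool) \<Rightarrow> vtx set \<Rightarrow> edge set \<Rightarrow> bool" where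
  "rep k s S A = ((\<forall>v\<in>verts k. s (inp v) = (v \<in> S)) \<and> (\<forall>ed\<in>edges k. s (outp ed) = (ed \<in> A)))"

lemma vwin_verts: "v \<in> verts k \<Longrightarrow> set (vwin k i v) \<subseteq> verts k"
  by (simp add: vwin_def set_winL Win_verts UN_subset_iff)

lemma rnd_step:
  assumes r: "rep k s S A"
  shows "rep k (exec_round (rnd k i) s) (symd S (sigma k (reduce k i S))) (symd A (reduce k i S))"
  unfolding rep_def
proof (intro conjI ballI)
  fix v assume v: "v \<in> verts k"
  have m: "vop k i v \<in> set (rnd k i)" using v by (simp add: rnd_def set_vl)
  have ex: "exec_round (rnd k i) s (inp v) =
      (v \<in> symd (dec (vwin k i v) (map s (map inp (vwin k i v))))
          (sigma k (reduce k i (dec (vwin k i v) (map s (map inp (vwin k i v)))))))"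
    using exec_round_at[OF distinct_rnd m[unfolded vop_def]] by simp
  let ?S' = "{u \<in> set (vwin k i v). u \<in> S}"
  have d: "dec (vwin k i v) (map s (map inp (vwin k i v))) = ?S'"
    using dec_map[of "vwin k i v" "\<lambda>u. s (inp u)"] r vwin_verts[OF v, of i]
    unfolding rep_def by (auto simp: o_def)
  have ag: "agr S ?S' (set (vwin k i v))" by (simp add: agr_def)
  show "exec_round (rnd k i) s (inp v) = (v \<in> symd S (sigma k (reduce k i S)))"
    unfolding ex d using vert_loc[OF v ag] by simp
next
  fix ed assume ed: "ed \<in> edges k"
  let ?L = "winL k i (base k i (fst ed)) 6"
  have m: "eop k i ed \<in> set (rnd k i)" using ed by (simp add: rnd_def set_el)
  have ex: "exec_round (rnd k i) s (outp ed) =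
      (s (outp ed) \<noteq> (ed \<in> reduce k i (dec ?L (map s (map inp ?L)))))"
    using exec_round_at[OF distinct_rnd m[unfolded eop_def]] by simp
  let ?S' = "{u \<in> set ?L. u \<in> S}"
  have d: "dec ?L (map s (map inp ?L)) = ?S'"
    using dec_map[of ?L "\<lambda>u. s (inp u)"] r Win_verts[of k i "base k i (fst ed)" 6]
    unfolding rep_def set_winL by (auto simp: o_def)
  have ag: "agr S ?S' (Win k i (base k i (fst ed)) 6)" by (simp add: agr_def set_winL)
  show "exec_round (rnd k i) s (outp ed) = (ed \<in> symd A (reduce k i S))"
    unfolding ex d using reduce_loc[OF ag] r ed unfolding rep_def by simp
qed

lemma decode_Suc: "decode_from k (Suc j) S =
   symd (reduce k (Suc j) S) (decode_from k j (symd S (sigma k (reduce k (Suc j) S))))"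
proof (cases "S = {}")
  case True
  have d0: "decode_from k j {} = {}" by (cases j) auto
  have s0: "sigma k {} = {}" by (simp add: sigma_def)
  show ?thesis using True by (simp add: reduce_empty s0 d0 symd_def)
qed (simp add: Let_def)

lemma exec_Cons: "exec (R # P) s = exec P (exec_round R s)"
  by (simp add: exec_def)

lemma main_ind:
  "rep k s S A \<Longrightarrow> ed \<in> edges k \<Longrightarrow>
     exec (map (rnd k) (rev [1..<Suc j])) s (outp ed) = (ed \<in> symd A (decode_from k j S))"
proof (induction j arbitrary: s S A)
  case 0
  then show ?case by (simp add: exec_def rep_def symd_def)
next
  case (Suc j)
  have "rev [1..<Suc (Suc j)] = Suc j # rev [1..<Suc j]" by simp
  then have "exec (map (rnd k) (rev [1..<Suc (Suc j)])) s (outp ed)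
     = exec (map (rnd k) (rev [1..<Suc j])) (exec_round (rnd k (Suc j)) s) (outp ed)"
    by (simp add: exec_Cons)
  also have "\<dots> = (ed \<in> symd (symd A (reduce k (Suc j) S))
        (decode_from k j (symd S (sigma k (reduce k (Suc j) S)))))"
    by (rule Suc.IH[OF rnd_step[OF Suc.prems(1)] Suc.prems(2)])
  also have "\<dots> = (ed \<in> symd A (decode_from k (Suc j) S))"
    unfolding decode_Suc by auto
  finally show ?case .
qed

lemma decode_edges: "decode_from k j S \<subseteq> edges k"
proof (induction j arbitrary: S)
  case 0 then show ?case by simp
next
  case (Suc j) then show ?case unfolding decode_Suc by (intro symd_sub reduce_edges)
qed

lemma inp_eq: "(inp u = inp v) = (u = v)" by (simp add: inp_def)

lemma correct:
  assumes "e \<subseteq> edges k"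
  shows "{ed \<in> edges k. exec (prog k) (\<lambda>r. \<exists>v\<in>sigma k e. inp v = r) (outp ed)} = decoder k e"
proof -
  let ?s = "\<lambda>r. \<exists>v\<in>sigma k e. inp v = r"
  have r: "rep k ?s (sigma k e) {}"
    unfolding rep_def by (simp add: inp_eq inp_outp)
  have m: "\<And>ed. ed \<in> edges k \<Longrightarrow> exec (prog k) ?s (outp ed) = (ed \<in> decoder k e)"
  proof -
    fix ed assume "ed \<in> edges k"
    from main_ind[OF r this, of k] show "exec (prog k) ?s (outp ed) = (ed \<in> decoder k e)"
      unfolding prog_def decoder_def by simp
  qed
  have "decoder k e \<subseteq> edges k" unfolding decoder_def by (rule decode_edges)
  then show ?thesis using m by blast
qed

lemma wf_prog: "well_formed 677 (prog k)"
  unfolding well_formed_def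
proof
  fix R assume "R \<in> set (prog k)"
  then obtain i where R: "R = rnd k i" by (auto simp: prog_def)
  have "distinct (map fst R)" using R distinct_rnd by simp
  moreover have "\<forall>q\<in>set R. length (snd (snd q)) \<le> 677"
    using R by (auto simp: rnd_def vop_def eop_def length_vwin length_winL)
  ultimately show "distinct (map fst R) \<and> (\<forall>q\<in>set R. length (snd (snd q)) \<le> 677)" ..
qed

lemma card_edges: "card (edges k) = 2 * 4 ^ k"
proof -
  have "card (verts k) = 4 ^ k"
    by (simp add: verts_def side_def card_cartesian_product power_mult_distrib[symmetric])
  then show ?thesis by (simp add: edges_def card_cartesian_product)
qed

lemma work_prog: "work (prog k) = k * (3 * 4 ^ k)"
proof -
  have l: "\<And>i. length (rnd k i) = 3 * 4 ^ k"
    by (simp add: rnd_def vl_def el_def side_def power_mult_distrib[symmetric])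
  show ?thesis
    by (simp add: work_def prog_def o_def l sum_list_triv)
qed

lemma depth_prog: "depth (prog k) = k"
  by (simp add: depth_def prog_def)

lemma log_edges: "log 2 (real (card (edges k))) = 2 * real k + 1"
proof -
  have "card (edges k) = 2 ^ (2 * k + 1)"
    by (simp add: card_edges power_mult)
  then have "real (card (edges k)) = 2 ^ (2 * k + 1)" by simp
  then show ?thesis using log_pow_cancel[of "2::real" "2*k+1"] by simp
qed


theorem proposition2:
  "\<exists>(C::real) (d::nat). \<forall>k\<ge>1. \<exists>(P::bprog) (inp::vtx \<Rightarrow> nat) (outp::edge \<Rightarrow> nat).
     inj inp \<and> inj outp \<and> well_formed d P \<and>
     real (work P) \<le> C * real (card (edges k)) * log 2 (real (card (edges k))) \<and>
     real (depth P) \<le> C * log 2 (real (card (edges k))) \<and>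
     (\<forall>e \<subseteq> edges k.
        {ed \<in> edges k. exec P (\<lambda>r. \<exists>v\<in>sigma k e. inp v = r) (outp ed)} = decoder k e)"
proof (rule exI[of _ 1], rule exI[of _ 677], intro allI impI)
  fix k :: nat assume "1 \<le> k"
  have w: "real (work (prog k)) = 3 * (real k * 4 ^ k)" by (simp add: work_prog)
  have c: "real (card (edges k)) = 2 * 4 ^ k" by (simp add: card_edges)
  have nn: "0 \<le> real k * 4 ^ k" "0 \<le> (4::real) ^ k" by simp_all
  have W: "real (work (prog k)) \<le> 1 * real (card (edges k)) * log 2 (real (card (edges k)))"
    unfolding log_edges unfolding w c using nn by (simp add: algebra_simps)
  have D: "real (depth (prog k)) \<le> 1 * log 2 (real (card (edges k)))"
    unfolding log_edges depth_prog by simp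
  show "\<exists>(P::bprog) (inp::vtx \<Rightarrow> nat) (outp::edge \<Rightarrow> nat).
     inj inp \<and> inj outp \<and> well_formed 677 P \<and>
     real (work P) \<le> 1 * real (card (edges k)) * log 2 (real (card (edges k))) \<and>
     real (depth P) \<le> 1 * log 2 (real (card (edges k))) \<and>
     (\<forall>e \<subseteq> edges k.
        {ed \<in> edges k. exec P (\<lambda>r. \<exists>v\<in>sigma k e. inp v = r) (outp ed)} = decoder k e)"
    using inj_inp inj_outp wf_prog W D correct by blast
qed

end
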